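(* For integers $\ell\ge 3$ and $r\ge 1$, let $\mathcal{C}_\ell$ be the class of all cycles of length at least $\ell$. Then $R_{r\text{-loc}}(\mathcal{C}_\ell)\le 2\ell r$.
   Context: An edge colouring of a graph is an $r$-local colouring if the edges incident to any vertex are coloured with at most $r$ colours (the total number of colours is not restricted). For a class of graphs $\mathcal{H}$, the $r$-local Ramsey number $R_{r\text{-loc}}(\mathcal{H})$ is the smallest $n$ such that every $r$-local colouring of the edges of $K_n$ contains a monochromatic copy of some graph $H\in\mathcal{H}$. *)

theory Defs
  imports Main
begin

text \<open>Edge colourings of the complete graph K_n on vertex set {0..<n}:
  a symmetric function c, where c u v is the colour of edge uv (u \<noteq> v).\<close>

definition edge_colouring :: "nat \<Rightarrow> (nat \<Rightarrow> nat \<Rightarrow> nat) \<Rightarrow> bool" where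
  "edge_colouring n c \<longleftrightarrow> (\<forall>u<n. \<forall>v<n. u \<noteq> v \<longrightarrow> c u v = c v u)"

definition r_local :: "nat \<Rightarrow> nat \<Rightarrow> (nat \<Rightarrow> nat \<Rightarrow> nat) \<Rightarrow> bool" where
  "r_local r n c \<longleftrightarrow> (\<forall>v<n. card (c v ` ({..<n} - {v})) \<le> r)"

definition mono_long_cycle :: "nat \<Rightarrow> nat \<Rightarrow> (nat \<Rightarrow> nat \<Rightarrow> nat) \<Rightarrow> bool" where
  "mono_long_cycle l n c \<longleftrightarrow> (\<exists>vs col. distinct vs \<and> length vs \<ge> l \<and> length vs \<ge> 3 \<and>
      set vs \<subseteq> {..<n} \<and>
      (\<forall>i<length vs. c (vs ! i) (vs ! ((i + 1) mod length vs)) = col))"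

definition rloc_ramsey_cycles :: "nat \<Rightarrow> nat \<Rightarrow> nat" where
  "rloc_ramsey_cycles r l = (LEAST n. \<forall>c. edge_colouring n c \<longrightarrow> r_local r n c \<longrightarrow> mono_long_cycle l n c)"

end

theory Submission
  imports Defs
begin

lemma long_cycle:
  fixes E :: "nat \<Rightarrow> nat \<Rightarrow> bool"
  assumes fin: "finite S" and ne: "S \<noteq> {}" and sym: "\<And>u v. E u v \<Longrightarrow> E v u"
    and irr: "\<And>u. \<not> E u u" and k1: "k \<ge> 1"
    and deg: "\<And>v. v \<in> S \<Longrightarrow> card {w\<in>S. E v w} \<ge> k"
  shows "\<exists>vs. distinct vs \<and> length vs \<ge> k+1 \<and> set vs \<subseteq> S \<and>
           (\<forall>i<length vs. E (vs!i) (vs!((i+1) mod length vs)))"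
proof -
  define P where "P ps \<longleftrightarrow> ps \<noteq> [] \<and> distinct ps \<and> set ps \<subseteq> S \<and>
     (\<forall>i. Suc i < length ps \<longrightarrow> E (ps!i) (ps!Suc i))" for ps
  obtain s where s: "s \<in> S" using ne by blast
  have P1: "P [s]" using s by (simp add: P_def)
  have bnd: "\<forall>y. P y \<longrightarrow> length y < card S + 1"
  proof (intro allI impI)
    fix y assume "P y"
    then have "card (set y) \<le> card S" using fin by (simp add: P_def card_mono)
    moreover have "card (set y) = length y" using \<open>P y\<close> by (simp add: P_def distinct_card)
    ultimately show "length y < card S + 1" by simp
  qed
  obtain ps where Pps: "P ps" and mx: "\<forall>y. P y \<longrightarrow> length y \<le> length ps"
    using ex_has_greatest_nat[of P "[s]" length "card S + 1"] P1 bnd by blast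
  have ne_ps: "ps \<noteq> []" and dps: "distinct ps" and sps: "set ps \<subseteq> S"
    and eps: "\<And>i. Suc i < length ps \<Longrightarrow> E (ps!i) (ps!Suc i)" using Pps by (auto simp: P_def)
  have nb: "w \<in> set ps" if "w \<in> S" "E (ps!0) w" for w
  proof (rule ccontr)
    assume nw: "w \<notin> set ps"
    have "P (w # ps)" unfolding P_def
    proof (intro conjI allI impI)
      show "distinct (w#ps)" using nw dps by simp
      show "set (w#ps) \<subseteq> S" using sps that by simp
      fix i assume i: "Suc i < length (w#ps)"
      show "E ((w#ps)!i) ((w#ps)!Suc i)"
      proof (cases i)
        case 0 then show ?thesis using sym that by simp
      next
        case (Suc i') then show ?thesis using eps i by simp
      qed
    qed simp
    then show False using mx by fastforce
  qed
  define J where "J = {i. i < length ps \<and> E (ps!0) (ps!i)}"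
  have finJ: "finite J" unfolding J_def by simp
  have "{w\<in>S. E (ps!0) w} \<subseteq> (\<lambda>i. ps!i) ` J"
  proof
    fix w assume "w \<in> {w\<in>S. E (ps!0) w}"
    then have w: "w \<in> S" "E (ps!0) w" by auto
    then have "w \<in> set ps" using nb by blast
    then obtain i where "i < length ps" "ps!i = w" by (auto simp: in_set_conv_nth)
    then show "w \<in> (\<lambda>i. ps!i) ` J" using w unfolding J_def by auto
  qed
  then have "card {w\<in>S. E (ps!0) w} \<le> card ((\<lambda>i. ps!i) ` J)"
    using finJ by (intro card_mono) auto
  also have "\<dots> \<le> card J" using finJ by (rule card_image_le)
  finally have "card {w\<in>S. E (ps!0) w} \<le> card J" .
  moreover have "ps!0 \<in> S" using ne_ps sps by auto
  ultimately have kJ: "k \<le> card J" using deg by fastforce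
  then have Jne: "J \<noteq> {}" using k1 by auto
  define j where "j = Max J"
  have jJ: "j \<in> J" using Jne finJ j_def by simp
  have "J \<subseteq> {1..j}"
  proof
    fix i assume iJ: "i \<in> J"
    have "i \<noteq> 0"
    proof
      assume "i = 0" then show False using iJ irr unfolding J_def by simp
    qed
    moreover have "i \<le> j" using iJ finJ j_def by simp
    ultimately show "i \<in> {1..j}" by simp
  qed
  then have "card J \<le> j" using card_mono[of "{1..j}" J] by simp
  then have kj: "k \<le> j" using kJ by simp
  have jl: "j < length ps" using jJ J_def by simp
  have ej: "E (ps!0) (ps!j)" using jJ J_def by simp
  define vs where "vs = take (Suc j) ps"
  have lvs: "length vs = Suc j" using jl vs_def by simp
  show ?thesis
  proof (intro exI conjI allI impI)
    show "distinct vs" using dps vs_def by simp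
    show "k + 1 \<le> length vs" using lvs kj by simp
    show "set vs \<subseteq> S" using sps vs_def by (meson order_trans set_take_subset)
    fix i assume i: "i < length vs"
    show "E (vs!i) (vs!((i+1) mod length vs))"
    proof (cases "i < j")
      case True
      then show ?thesis using lvs vs_def eps[of i] jl by simp
    next
      case False
      then have "i = j" using i lvs by simp
      then show ?thesis using lvs vs_def sym[OF ej] by simp
    qed
  qed
qed

lemma degen:
  fixes E :: "nat \<Rightarrow> nat \<Rightarrow> bool"
  assumes fin: "finite S"
    and low: "\<And>T. T \<subseteq> S \<Longrightarrow> T \<noteq> {} \<Longrightarrow> \<exists>v\<in>T. card {w\<in>T. E v w} \<le> d"
    and sym: "\<And>u v. E u v \<Longrightarrow> E v u"
  shows "T \<subseteq> S \<Longrightarrow> card {(u,v). u\<in>T \<and> v\<in>T \<and> E u v} \<le> 2*d*card T"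
proof (induction "card T" arbitrary: T rule: less_induct)
  case less
  show ?case
  proof (cases "T = {}")
    case True then show ?thesis by simp
  next
    case False
    have finT: "finite T" using less.prems fin finite_subset by blast
    obtain v where v: "v \<in> T" "card {w\<in>T. E v w} \<le> d" using low[OF less.prems False] by blast
    define T' where "T' = T - {v}"
    have cT': "card T' = card T - 1" using v finT T'_def by simp
    have ih: "card {(u,w). u\<in>T' \<and> w\<in>T' \<and> E u w} \<le> 2*d*card T'"
    proof (rule less.hyps)
      show "card T' < card T" using cT' v finT by (metis card_gt_0_iff diff_less empty_iff less_one)
      show "T' \<subseteq> S" using less.prems T'_def by blast
    qed
    define N where "N = {w\<in>T. E v w}"
    have "{(u,w). u\<in>T \<and> w\<in>T \<and> E u w} \<subseteq>
        {(u,w). u\<in>T' \<and> w\<in>T' \<and> E u w} \<union> ({v} \<times> N) \<union> ((\<lambda>w. (w,v)) ` N)"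
      unfolding T'_def N_def using sym by auto
    moreover have "finite {(u,w). u\<in>T' \<and> w\<in>T' \<and> E u w}"
      by (rule finite_subset[of _ "T' \<times> T'"]) (auto simp: T'_def finT)
    moreover have finN: "finite N" using finT N_def by simp
    ultimately have "card {(u,w). u\<in>T \<and> w\<in>T \<and> E u w} \<le>
        card ({(u,w). u\<in>T' \<and> w\<in>T' \<and> E u w} \<union> ({v} \<times> N) \<union> ((\<lambda>w. (w,v)) ` N))"
      by (intro card_mono) auto
    also have "\<dots> \<le> card ({(u,w). u\<in>T' \<and> w\<in>T' \<and> E u w} \<union> ({v} \<times> N)) + card ((\<lambda>w. (w,v)) ` N)"
      by (rule card_Un_le)
    also have "\<dots> \<le> card {(u,w). u\<in>T' \<and> w\<in>T' \<and> E u w} + card ({v} \<times> N) + card ((\<lambda>w. (w,v)) ` N)"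
      using card_Un_le by auto
    also have "\<dots> \<le> 2*d*card T' + d + d"
      using ih v(2) N_def card_image_le[OF finN, of "\<lambda>w. (w,v)"] by (simp add: card_cartesian_product)
    also have "\<dots> = 2*d*card T"
      using cT' v finT by (cases "card T") (auto simp: algebra_simps)
    finally show ?thesis .
  qed
qed

lemma main_count:
  fixes l r n :: nat and c :: "nat \<Rightarrow> nat \<Rightarrow> nat"
  assumes l3: "l \<ge> 3" and ec: "edge_colouring n c" and rl: "r_local r n c"
    and nomono: "\<not> mono_long_cycle l n c"
  shows "n * (n - 1) \<le> n * (2 * (l - 2) * r)"
proof -
  define E where "E col u v \<longleftrightarrow> u < n \<and> v < n \<and> u \<noteq> v \<and> c u v = col" for col u v
  define V where "V col = {v. v < n \<and> (\<exists>w. E col v w)}" for col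
  define D where "D = {(u,v). u < n \<and> v < n \<and> u \<noteq> v}"
  define C where "C = (\<lambda>(u,v). c u v) ` D"
  define Pc where "Pc col = {(u,v). u \<in> V col \<and> v \<in> V col \<and> E col u v}" for col
  have symE: "E col v u" if "E col u v" for col u v
    using that ec unfolding E_def edge_colouring_def by metis
  have irrE: "\<not> E col u u" for col u unfolding E_def by simp
  have finV: "finite (V col)" for col unfolding V_def by simp
  have finD: "finite D" by (rule finite_subset[of _ "{..<n} \<times> {..<n}"]) (auto simp: D_def)
  have finC: "finite C" using finD C_def by simp
  have Pbound: "card (Pc col) \<le> 2 * (l - 2) * card (V col)" for col
    unfolding Pc_def
  proof (rule degen[OF finV _ symE order_refl])
    fix T assume T: "T \<subseteq> V col" "T \<noteq> {}"
    show "\<exists>v\<in>T. card {w\<in>T. E col v w} \<le> l - 2"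
    proof (rule ccontr)
      assume "\<not> ?thesis"
      then have dg: "\<And>v. v \<in> T \<Longrightarrow> card {w\<in>T. E col v w} \<ge> l - 1" by force
      have finT: "finite T" using T finV finite_subset by blast
      obtain vs where vs: "distinct vs" "length vs \<ge> l - 1 + 1" "set vs \<subseteq> T"
        "\<forall>i<length vs. E col (vs!i) (vs!((i+1) mod length vs))"
      proof -
        have "\<exists>vs. distinct vs \<and> length vs \<ge> l - 1 + 1 \<and> set vs \<subseteq> T \<and>
           (\<forall>i<length vs. E col (vs!i) (vs!((i+1) mod length vs)))"
        proof (rule long_cycle[of T "E col" "l - 1"])
          show "finite T" by (rule finT)
          show "T \<noteq> {}" by (rule T(2))
          show "E col v u" if "E col u v" for u v using symE[OF that] .
          show "\<not> E col u u" for u by (rule irrE)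
          show "1 \<le> l - 1" using l3 by simp
          show "l - 1 \<le> card {w \<in> T. E col v w}" if "v \<in> T" for v using dg[OF that] .
        qed
        then show ?thesis using that by blast
      qed
      have "mono_long_cycle l n c"
        unfolding mono_long_cycle_def
      proof (intro exI conjI)
        show "distinct vs" by (rule vs(1))
        show "l \<le> length vs" using vs(2) l3 by simp
        show "3 \<le> length vs" using vs(2) l3 by simp
        show "set vs \<subseteq> {..<n}" using vs(3) T(1) unfolding V_def by auto
        show "\<forall>i<length vs. c (vs!i) (vs!((i+1) mod length vs)) = col"
          using vs(4) unfolding E_def by blast
      qed
      then show False using nomono by simp
    qed
  qed
  have Dun: "D = (\<Union>col\<in>C. Pc col)"
  proof
    show "D \<subseteq> (\<Union>col\<in>C. Pc col)"
    proof
      fix x assume x: "x \<in> D"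
      obtain u v where uv: "x = (u,v)" by fastforce
      have e: "E (c u v) u v" using x uv unfolding D_def E_def by auto
      have "(u,v) \<in> Pc (c u v)" unfolding Pc_def V_def using e symE[OF e]
        unfolding E_def by blast
      moreover have "c u v \<in> C" using x uv unfolding C_def by force
      ultimately show "x \<in> (\<Union>col\<in>C. Pc col)" using uv by blast
    qed
    show "(\<Union>col\<in>C. Pc col) \<subseteq> D" unfolding Pc_def D_def E_def by auto
  qed
  have "card D = (\<Sum>col\<in>C. card (Pc col))"
    unfolding Dun
  proof (rule card_UN_disjoint[OF finC])
    show "\<forall>i\<in>C. finite (Pc i)"
      using finV by (auto intro: finite_subset[of _ "V _ \<times> V _"] simp: Pc_def)
    show "\<forall>i\<in>C. \<forall>j\<in>C. i \<noteq> j \<longrightarrow> Pc i \<inter> Pc j = {}"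
      unfolding Pc_def E_def by auto
  qed
  also have "\<dots> \<le> (\<Sum>col\<in>C. 2 * (l - 2) * card (V col))"
    by (rule sum_mono) (rule Pbound)
  also have "\<dots> = 2 * (l - 2) * (\<Sum>col\<in>C. card (V col))"
    by (simp add: sum_distrib_left)
  also have "(\<Sum>col\<in>C. card (V col)) = card (SIGMA col:C. V col)"
    using finC finV by (simp add: card_SigmaI)
  also have "(SIGMA col:C. V col) = (\<lambda>(a,b). (b,a)) ` (SIGMA v:{..<n}. c v ` ({..<n} - {v}))"
  proof
    show "(SIGMA col:C. V col) \<subseteq> (\<lambda>(a,b). (b,a)) ` (SIGMA v:{..<n}. c v ` ({..<n} - {v}))"
    proof
      fix x assume "x \<in> (SIGMA col:C. V col)"
      then obtain col v where x: "x = (col, v)" "v \<in> V col" by blast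
      then obtain w where "E col v w" "v < n" unfolding V_def by blast
      then have "(v, col) \<in> (SIGMA v:{..<n}. c v ` ({..<n} - {v}))" unfolding E_def by auto
      then show "x \<in> (\<lambda>(a,b). (b,a)) ` (SIGMA v:{..<n}. c v ` ({..<n} - {v}))"
        using x by force
    qed
    show "(\<lambda>(a,b). (b,a)) ` (SIGMA v:{..<n}. c v ` ({..<n} - {v})) \<subseteq> (SIGMA col:C. V col)"
    proof
      fix x assume "x \<in> (\<lambda>(a,b). (b,a)) ` (SIGMA v:{..<n}. c v ` ({..<n} - {v}))"
      then obtain v w where x: "x = (c v w, v)" "v < n" "w < n" "w \<noteq> v" by auto
      have "c v w \<in> C" using x unfolding C_def D_def by force
      moreover have "v \<in> V (c v w)" using x unfolding V_def E_def by auto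
      ultimately show "x \<in> (SIGMA col:C. V col)" using x by blast
    qed
  qed
  also have "card ((\<lambda>(a,b). (b,a)) ` (SIGMA v:{..<n}. c v ` ({..<n} - {v})))
      = card (SIGMA v:{..<n}. c v ` ({..<n} - {v}))"
    by (rule card_image) (auto simp: inj_on_def)
  also have "\<dots> = (\<Sum>v<n. card (c v ` ({..<n} - {v})))"
    by (simp add: card_SigmaI)
  also have "\<dots> \<le> (\<Sum>v<n. r)"
    by (rule sum_mono) (use rl in \<open>auto simp: r_local_def\<close>)
  also have "\<dots> = n * r" by simp
  finally have A: "card D \<le> 2 * (l - 2) * (n * r)" by simp
  have "D = (SIGMA u:{..<n}. {..<n} - {u})" unfolding D_def by auto
  then have "card D = (\<Sum>u<n. card ({..<n} - {u}))" by (simp add: card_SigmaI)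
  also have "\<dots> = (\<Sum>u<n. n - 1)" by (rule sum.cong) auto
  also have "\<dots> = n * (n - 1)" by simp
  finally show ?thesis using A by (simp add: algebra_simps)
qed

theorem corollary2p5:
  fixes l r :: nat
  assumes "l \<ge> 3" and "r \<ge> 1"
  shows "rloc_ramsey_cycles r l \<le> 2 * l * r"
proof -
  let ?n = "2 * l * r"
  have "\<forall>c. edge_colouring ?n c \<longrightarrow> r_local r ?n c \<longrightarrow> mono_long_cycle l ?n c"
  proof (intro allI impI)
    fix c assume ec: "edge_colouring ?n c" and rl: "r_local r ?n c"
    show "mono_long_cycle l ?n c"
    proof (rule ccontr)
      assume "\<not> mono_long_cycle l ?n c"
      from main_count[OF assms(1) ec rl this]
      have "?n * (?n - 1) \<le> ?n * (2 * (l - 2) * r)" .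
      then have "0 < ?n \<longrightarrow> ?n - 1 \<le> 2 * (l - 2) * r" by (simp only: mult_le_cancel1)
      moreover have "?n > 0" using assms by simp
      ultimately have "?n - 1 \<le> 2 * (l - 2) * r" by blast
      moreover have "2 * (l - 2) * r = ?n - 4 * r" using assms by (simp add: algebra_simps diff_mult_distrib)
      moreover have "?n \<ge> 6 * r" using assms by simp
      ultimately show False using assms by linarith
    qed
  qed
  then show ?thesis unfolding rloc_ramsey_cycles_def by (rule Least_le)
qed

end
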